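(* Let $f,g$ satisfy the standing assumptions below. Suppose $\beta\ge\frac{4Q_gM_f}{\mu^3}$ and $\hat\beta\ge\beta\max\{\frac{8L_g^2}{\mu},\frac1{4\mu},\frac\mu4\}$. Then for any $(x,y)\in\mathbb{R}^n\times\mathbb{R}^p$ and any $w\in\hat{\mathcal{D}}_s(x,y)$, $\sup_{z\in\mathcal{D}_h(x,y)}\langle w,z\rangle\ge\min\{\frac14,\frac{\beta^2}{16\hat\beta^2}\}\|w\|^2$.
   Context: Standing assumptions. (A1) Constants $M_f,\mu,L_g,Q_g>0$ exist such that: $f:\mathbb{R}^n\times\mathbb{R}^p\to\mathbb{R}$ is $M_f$-Lipschitz; $g$ is twice differentiable with $\nabla^2_{yy}g\succeq\mu I_p$; $\nabla g$ is $L_g$-Lipschitz; $\nabla^2_{yy}g,\nabla^2_{xy}g$ are $Q_g$-Lipschitz; $\nabla^2_{yy}g$ is continuously differentiable ($\nabla^2_{xy}g\in\mathbb{R}^{n\times p}$ has entries $\partial^2g/\partial x_i\partial y_j$). (A2) $f$ is a potential function of a conservative field $\mathcal{D}_f$ with compact convex values of norm at most $M_f$. Notation (all at $(x,y)$): $H=\nabla^2_{yy}g$; $\mathcal{A}(x,y):=y-H^{-1}\nabla_yg$; $\nabla^3_{xyy}g(x,y)[d]:=\lim_{t\to0}\frac1t(\nabla^2_{xy}g(x,y+td)-\nabla^2_{xy}g(x,y))$, $\nabla^3_{yyy}g(x,y)[d]:=\lim_{t\to0}\frac1t(\nabla^2_{yy}g(x,y+td)-\nabla^2_{yy}g(x,y))$;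 $J_{A,x}:=-\nabla^2_{xy}gH^{-1}+\nabla^3_{xyy}g[H^{-1}\nabla_yg]H^{-1}$, $J_{A,y}:=\nabla^3_{yyy}g[H^{-1}\nabla_yg]H^{-1}$; $\mathcal{D}_h(x,y):=\{(d_x+J_{A,x}d_y+\beta\nabla^2_{xy}g\nabla_yg,\ J_{A,y}d_y+\beta H\nabla_yg):(d_x,d_y)\in\mathcal{D}_f(x,\mathcal{A}(x,y))\}$; $\hat{\mathcal{D}}_s(x,y):=\{(d_x-\nabla^2_{xy}gH^{-1}d_y,\ \hat\beta\nabla_yg):(d_x,d_y)\in\mathcal{D}_f(x,\mathcal{A}(x,y))\}$. *)

theory Defs
  imports "HOL-Analysis.Analysis"
begin

definition abs_continuous_on :: "real \<Rightarrow> real \<Rightarrow> (real \<Rightarrow> 'a::real_normed_vector) \<Rightarrow> bool" where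
  "abs_continuous_on a b \<gamma> \<longleftrightarrow>
     (\<forall>\<epsilon>>0. \<exists>\<delta>>0. \<forall>S::(real \<times> real) set.
        finite S \<and> (\<forall>(s,t)\<in>S. a \<le> s \<and> s \<le> t \<and> t \<le> b)
        \<and> (\<forall>(s,t)\<in>S. \<forall>(s',t')\<in>S. (s,t) \<noteq> (s',t') \<longrightarrow> t \<le> s' \<or> t' \<le> s)
        \<and> (\<Sum>(s,t)\<in>S. t - s) < \<delta>
        \<longrightarrow> (\<Sum>(s,t)\<in>S. norm (\<gamma> t - \<gamma> s)) < \<epsilon>)"

definition path_pairing :: "('a::euclidean_space \<Rightarrow> 'a set) \<Rightarrow> (real \<Rightarrow> 'a) \<Rightarrow> real \<Rightarrow> real" where
  "path_pairing D \<gamma> t = (SUP v\<in>D (\<gamma> t). vector_derivative \<gamma> (at t) \<bullet> v)"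

definition conservative_field :: "('a::euclidean_space \<Rightarrow> 'a set) \<Rightarrow> bool" where
  "conservative_field D \<longleftrightarrow>
     (\<forall>z. D z \<noteq> {} \<and> compact (D z))
     \<and> closed {(z, v). v \<in> D z}
     \<and> (\<forall>\<gamma>. abs_continuous_on 0 1 \<gamma> \<and> \<gamma> 0 = \<gamma> 1 \<longrightarrow>
            integral {0..1} (path_pairing D \<gamma>) = 0)"

definition potential_of :: "('a::euclidean_space \<Rightarrow> real) \<Rightarrow> ('a \<Rightarrow> 'a set) \<Rightarrow> bool" where
  "potential_of f D \<longleftrightarrow> conservative_field D \<and>
     (\<forall>\<gamma>. abs_continuous_on 0 1 \<gamma> \<longrightarrow>
            f (\<gamma> 1) = f (\<gamma> 0) + integral {0..1} (path_pairing D \<gamma>))"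

end

theory Submission
  imports Defs
begin


lemma deriv_lip_bound:
  fixes f :: "'a::real_normed_vector \<Rightarrow> 'b::real_normed_vector"
  assumes d: "(f has_derivative f') (at x)"
    and lip: "\<And>u v. norm (f u - f v) \<le> L * norm (u - v)"
  shows "norm (f' v) \<le> L * norm v"
proof (cases "v = 0")
  case True
  have "linear f'" using d has_derivative_linear by blast
  then show ?thesis using True by (simp add: linear_0)
next
  case False
  have bl: "bounded_linear f'" using d has_derivative_bounded_linear by blast
  show ?thesis
  proof (rule field_le_epsilon)
    fix e :: real assume e: "e > 0"
    have e': "e / norm v > 0" using e False by simp
    from d[unfolded has_derivative_at_alt] e' obtain r where r: "r > 0"
      and H: "\<And>y. norm (y - x) < r \<Longrightarrow> norm (f y - f x - f' (y - x)) \<le> e / norm v * norm (y - x)"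
      by blast
    define t where "t = r / (2 * norm v)"
    have t: "t > 0" using r False by (simp add: t_def)
    have tn: "norm (t *\<^sub>R v) < r" using r False t by (simp add: t_def)
    have "norm (f (x + t *\<^sub>R v) - f x - f' (t *\<^sub>R v)) \<le> e / norm v * norm (t *\<^sub>R v)"
      using H[of "x + t *\<^sub>R v"] tn by simp
    also have "\<dots> = e * t" using t False by simp
    finally have h1: "norm (f (x + t *\<^sub>R v) - f x - f' (t *\<^sub>R v)) \<le> e * t" .
    have h2: "norm (f (x + t *\<^sub>R v) - f x) \<le> L * (t * norm v)"
      using lip[of "x + t *\<^sub>R v" x] t by simp
    have "norm (f' (t *\<^sub>R v)) \<le> norm (f (x + t *\<^sub>R v) - f x) + norm (f (x + t *\<^sub>R v) - f x - f' (t *\<^sub>R v))"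
      by (metis norm_triangle_ineq4 diff_diff_eq2 diff_self diff_zero add_diff_cancel_left' norm_minus_commute order_trans norm_diff_triangle_ineq
          eq_iff_diff_eq_0)
    also have "\<dots> \<le> L * (t * norm v) + e * t" using h1 h2 by simp
    finally have "t * norm (f' v) \<le> t * (L * norm v + e)"
      using t by (simp add: linear_cmul[OF bounded_linear.linear[OF bl]] algebra_simps)
    then show "norm (f' v) \<le> L * norm v + e" using t by simp
  qed
qed



lemma T3_bound:
  fixes M :: "'z::real_normed_vector \<Rightarrow> real^'p::finite^'m::finite"
  assumes lim: "((\<lambda>t. (1 / t) *\<^sub>R (M (b + t *\<^sub>R d) - M b)) \<longlongrightarrow> T) (at 0)"
    and lip: "\<And>z z'. onorm (\<lambda>v. (M z - M z') *v v) \<le> Q * dist z z'"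
  shows "norm (T *v u) \<le> Q * norm d * norm u"
proof (rule Lim_norm_ubound[where f="\<lambda>t. ((1 / t) *\<^sub>R (M (b + t *\<^sub>R d) - M b)) *v u"])
  show "\<not> trivial_limit (at (0::real))" by simp
  have "linear (\<lambda>A::real^'p^'m. A *v u)"
    by (rule linearI) (simp_all add: matrix_vector_mult_add_rdistrib scaleR_matrix_vector_assoc)
  then have "bounded_linear (\<lambda>A::real^'p^'m. A *v u)"
    using linear_conv_bounded_linear by blast
  then show "((\<lambda>t. ((1 / t) *\<^sub>R (M (b + t *\<^sub>R d) - M b)) *v u) \<longlongrightarrow> T *v u) (at 0)"
    using bounded_linear.tendsto[OF _ lim] by blast
  have "norm (((1 / t) *\<^sub>R (M (b + t *\<^sub>R d) - M b)) *v u) \<le> Q * norm d * norm u" if t: "t \<noteq> 0" for t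
  proof -
    have "norm (((1 / t) *\<^sub>R (M (b + t *\<^sub>R d) - M b)) *v u) = \<bar>1/t\<bar> * norm ((M (b + t *\<^sub>R d) - M b) *v u)"
      by (simp add: scaleR_matrix_vector_assoc[symmetric])
    also have "norm ((M (b + t *\<^sub>R d) - M b) *v u) \<le> onorm (\<lambda>v. (M (b + t *\<^sub>R d) - M b) *v v) * norm u"
      by (rule onorm) (simp add: matrix_vector_mul_bounded_linear)
    also have "\<dots> \<le> Q * dist (b + t *\<^sub>R d) b * norm u"
      by (rule mult_right_mono[OF lip]) simp
    also have "dist (b + t *\<^sub>R d) b = \<bar>t\<bar> * norm d" by (simp add: dist_norm)
    finally show ?thesis using t by (simp add: field_simps mult_left_mono)
  qed
  then show "\<forall>\<^sub>F t in at 0. norm (((1 / t) *\<^sub>R (M (b + t *\<^sub>R d) - M b)) *v u) \<le> Q * norm d * norm u"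
    by (simp add: eventually_at_filter)
qed


lemma inv_facts:
  fixes H :: "real^'p::finite^'p"
  assumes mu: "\<mu> > 0" and s: "\<And>v. v \<bullet> (H *v v) \<ge> \<mu> * (norm v)\<^sup>2"
  shows "H *v (matrix_inv H *v v) = v" and "norm (matrix_inv H *v v) \<le> norm v / \<mu>"
proof -
  have low: "\<mu> * norm u \<le> norm (H *v u)" for u
  proof -
    have "\<mu> * (norm u)\<^sup>2 \<le> u \<bullet> (H *v u)" by (rule s)
    also have "\<dots> \<le> norm u * norm (H *v u)" by (metis norm_cauchy_schwarz)
    finally have "norm u * (\<mu> * norm u) \<le> norm u * norm (H *v u)" by (simp add: power2_eq_square algebra_simps)
    then show ?thesis
      by (cases "norm u = 0") (auto simp: mult_le_cancel_left)
  qed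
  have "\<forall>x. H *v x = 0 \<longrightarrow> x = 0"
    using low mu by (metis mult_le_0_iff norm_le_zero_iff norm_zero not_le)
  then obtain B where "B ** H = mat 1" using matrix_left_invertible_ker by blast
  then have inv: "invertible H" using matrix_left_right_inverse invertible_def by blast
  then have "H ** matrix_inv H = mat 1"
    using inv unfolding invertible_def matrix_inv_def by (metis (mono_tags, lifting) someI_ex)
  then show e: "H *v (matrix_inv H *v v) = v"
    by (simp add: matrix_vector_mul_assoc)
  have "\<mu> * norm (matrix_inv H *v v) \<le> norm v" using low[of "matrix_inv H *v v"] e by simp
  then show "norm (matrix_inv H *v v) \<le> norm v / \<mu>" using mu by (simp add: field_simps)
qed


lemma alg:
  fixes A G b bh mu L K P :: real
  assumes A: "A \<ge> 0" and G: "G \<ge> 0" and b: "b > 0" and bh: "bh > 0" and mu: "mu > 0" and L: "L \<ge> 0"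
    and K: "K \<ge> 0" "K \<le> b * mu / 4"
    and h1: "bh \<ge> b * (8 * L\<^sup>2 / mu)" and h2: "bh \<ge> b * (1 / (4 * mu))" and h3: "bh \<ge> b * (mu / 4)"
    and P: "P \<ge> A\<^sup>2 - A * K * G - b * L * A * G - bh * K * G\<^sup>2 + b * bh * mu * G\<^sup>2"
  shows "P \<ge> min (1/4) (b\<^sup>2 / (16 * bh\<^sup>2)) * (A\<^sup>2 + bh\<^sup>2 * G\<^sup>2)"
proof -
  define c where "c = min (1/4) (b\<^sup>2 / (16 * bh\<^sup>2))"
  define s where "s = b * (mu / 4 + L)"
  have c1: "c * A\<^sup>2 \<le> (1/4) * A\<^sup>2" unfolding c_def by (intro mult_right_mono) auto
  have "c * (bh\<^sup>2 * G\<^sup>2) \<le> (b\<^sup>2 / (16 * bh\<^sup>2)) * (bh\<^sup>2 * G\<^sup>2)"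
    unfolding c_def by (intro mult_right_mono) auto
  also have "\<dots> = b\<^sup>2 * G\<^sup>2 / 16" using bh by (simp add: field_simps power2_eq_square)
  also have "\<dots> \<le> b * bh * mu * G\<^sup>2 / 4"
  proof -
    have "b / 4 \<le> bh * mu" using h2 mu by (simp add: field_simps)
    then have "b * (b/4) * G\<^sup>2 \<le> b * (bh * mu) * G\<^sup>2" using b by (intro mult_right_mono mult_left_mono) auto
    then show ?thesis by (simp add: power2_eq_square field_simps)
  qed
  finally have c2: "c * (bh\<^sup>2 * G\<^sup>2) \<le> b * bh * mu * G\<^sup>2 / 4" .
  have KG: "bh * K * G\<^sup>2 \<le> bh * (b * mu / 4) * G\<^sup>2" using K bh by (intro mult_right_mono mult_left_mono) auto
  have KA: "A * K * G \<le> A * (b * mu / 4) * G" using K A G by (intro mult_right_mono mult_left_mono) auto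
  have s2: "s\<^sup>2 \<le> 3/4 * b * bh * mu"
  proof -
    have q: "(mu / 4 + L)\<^sup>2 \<le> 2 * (mu\<^sup>2 / 16 + L\<^sup>2)"
    proof -
      have "0 \<le> (mu / 4 - L)\<^sup>2" by simp
      then show ?thesis by (simp add: power2_eq_square algebra_simps)
    qed
    have "s\<^sup>2 = b\<^sup>2 * (mu / 4 + L)\<^sup>2" unfolding s_def by (simp add: power_mult_distrib)
    also have "\<dots> \<le> b\<^sup>2 * (2 * (mu\<^sup>2 / 16 + L\<^sup>2))" using q by (intro mult_left_mono) auto
    finally have "s\<^sup>2 \<le> 2 * b\<^sup>2 * (mu\<^sup>2 / 16 + L\<^sup>2)" by (simp add: algebra_simps)
    also have "\<dots> = b * (b * mu\<^sup>2 / 8) + b * (2 * b * L\<^sup>2)" by (simp add: algebra_simps power2_eq_square)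
    also have "\<dots> \<le> b * (bh * mu / 2) + b * (bh * mu / 4)"
    proof (intro add_mono mult_left_mono)
      show "b * mu\<^sup>2 / 8 \<le> bh * mu / 2" using h3 mu by (simp add: field_simps power2_eq_square)
      show "2 * b * L\<^sup>2 \<le> bh * mu / 4" using h1 mu by (simp add: field_simps)
    qed (use b in auto)
    finally show ?thesis by (simp add: algebra_simps)
  qed
  have key: "0 \<le> 3/4 * A\<^sup>2 - s * A * G + 1/2 * b * bh * mu * G\<^sup>2"
  proof -
    have "0 \<le> 3/4 * (A - 2/3 * s * G)\<^sup>2 + 1/3 * s\<^sup>2 * G\<^sup>2" by simp
    also have "\<dots> = 3/4 * A\<^sup>2 - s * A * G + 2/3 * s\<^sup>2 * G\<^sup>2" by (simp add: power2_eq_square algebra_simps)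
    also have "\<dots> \<le> 3/4 * A\<^sup>2 - s * A * G + 1/2 * b * bh * mu * G\<^sup>2"
    proof -
      have "s\<^sup>2 * G\<^sup>2 \<le> (3/4 * b * bh * mu) * G\<^sup>2" using s2 by (intro mult_right_mono) auto
      then show ?thesis by simp
    qed
    finally show ?thesis .
  qed
  have "c * (A\<^sup>2 + bh\<^sup>2 * G\<^sup>2) \<le> A\<^sup>2 / 4 + b * bh * mu * G\<^sup>2 / 4"
    using c1 c2 by (simp add: distrib_left)
  also have "\<dots> \<le> A\<^sup>2 - A * K * G - b * L * A * G - bh * K * G\<^sup>2 + b * bh * mu * G\<^sup>2"
    using key KG KA unfolding s_def by (simp add: algebra_simps)
  finally show ?thesis using P unfolding c_def by linarith
qed


theorem proposition4p6:
  fixes f g :: "(real^('n::finite)) \<times> (real^('p::finite)) \<Rightarrow> real"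
    and Dg :: "(real^'n) \<times> (real^'p) \<Rightarrow> (real^'n) \<times> (real^'p)"
    and Hyy :: "(real^'n) \<times> (real^'p) \<Rightarrow> real^'p^'p"
    and Hxy :: "(real^'n) \<times> (real^'p) \<Rightarrow> real^'p^'n"
    and T3xyy :: "(real^'n) \<times> (real^'p) \<Rightarrow> real^'p \<Rightarrow> real^'p^'n"
    and T3yyy :: "(real^'n) \<times> (real^'p) \<Rightarrow> real^'p \<Rightarrow> real^'p^'p"
    and Df :: "(real^'n) \<times> (real^'p) \<Rightarrow> ((real^'n) \<times> (real^'p)) set"
    and Mf \<mu> Lg Qg \<beta> \<beta>h :: real
    and x :: "real^'n" and y :: "real^'p"
    and w :: "(real^'n) \<times> (real^'p)"
  assumes pos: "Mf > 0" "\<mu> > 0" "Lg > 0" "Qg > 0"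
    \<comment> \<open>(A1) f is Mf-Lipschitz\<close>
    and f_lip: "\<forall>z z'. \<bar>f z - f z'\<bar> \<le> Mf * dist z z'"
    \<comment> \<open>g twice differentiable: Dg is the gradient of g and is differentiable\<close>
    and g_grad: "\<forall>z. (g has_derivative (\<lambda>h. Dg z \<bullet> h)) (at z)"
    and Dg_diff: "\<forall>z. Dg differentiable (at z)"
    \<comment> \<open>Hessian blocks: Hyy = nabla^2_yy g, Hxy = nabla^2_xy g (n x p)\<close>
    and Hyy_def: "\<forall>a b. ((\<lambda>b'. snd (Dg (a, b'))) has_derivative (\<lambda>d. Hyy (a, b) *v d)) (at b)"
    and Hxy_def: "\<forall>a b. ((\<lambda>b'. fst (Dg (a, b'))) has_derivative (\<lambda>d. Hxy (a, b) *v d)) (at b)"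
    \<comment> \<open>strong convexity in y\<close>
    and strong: "\<forall>z v. v \<bullet> (Hyy z *v v) \<ge> \<mu> * (norm v)\<^sup>2"
    \<comment> \<open>gradient Lg-Lipschitz\<close>
    and Dg_lip: "\<forall>z z'. dist (Dg z) (Dg z') \<le> Lg * dist z z'"
    \<comment> \<open>Hessian blocks Qg-Lipschitz (operator norm)\<close>
    and Hyy_lip: "\<forall>z z'. onorm (\<lambda>v. (Hyy z - Hyy z') *v v) \<le> Qg * dist z z'"
    and Hxy_lip: "\<forall>z z'. onorm (\<lambda>v. (Hxy z - Hxy z') *v v) \<le> Qg * dist z z'"
    \<comment> \<open>Hyy continuously differentiable\<close>
    and Hyy_C1: "\<exists>D :: (real^'n) \<times> (real^'p) \<Rightarrow> ((real^'n) \<times> (real^'p)) \<Rightarrow>\<^sub>L (real^'p^'p).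
                   (\<forall>z. (Hyy has_derivative blinfun_apply (D z)) (at z)) \<and> continuous_on UNIV D"
    \<comment> \<open>third-order directional derivatives along y (defined as limits)\<close>
    and T3xyy_def: "\<forall>a b d. ((\<lambda>t. (1 / t) *\<^sub>R (Hxy (a, b + t *\<^sub>R d) - Hxy (a, b))) \<longlongrightarrow> T3xyy (a, b) d) (at 0)"
    and T3yyy_def: "\<forall>a b d. ((\<lambda>t. (1 / t) *\<^sub>R (Hyy (a, b + t *\<^sub>R d) - Hyy (a, b))) \<longlongrightarrow> T3yyy (a, b) d) (at 0)"
    \<comment> \<open>(A2)\<close>
    and f_pot: "potential_of f Df"
    and Df_convex: "\<forall>z. convex (Df z)"
    and Df_bound: "\<forall>z. \<forall>v\<in>Df z. norm v \<le> Mf"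
    \<comment> \<open>parameters\<close>
    and beta: "\<beta> \<ge> 4 * Qg * Mf / \<mu> ^ 3"
    and betah: "\<beta>h \<ge> \<beta> * Max {8 * Lg\<^sup>2 / \<mu>, 1 / (4 * \<mu>), \<mu> / 4}"
    and w_in: "w \<in> (let H = Hyy (x, y); Hi = matrix_inv H; gy = snd (Dg (x, y));
                        A = y - Hi *v gy
                    in {(dx - (Hxy (x, y) ** Hi) *v dy, \<beta>h *\<^sub>R gy) | dx dy. (dx, dy) \<in> Df (x, A)})"
  shows "(SUP z \<in> (let H = Hyy (x, y); Hi = matrix_inv H; gy = snd (Dg (x, y));
                        A = y - Hi *v gy; d = Hi *v gy;
                        JAx = - (Hxy (x, y) ** Hi) + T3xyy (x, y) d ** Hi;
                        JAy = T3yyy (x, y) d ** Hi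
                    in {(dx + JAx *v dy + \<beta> *\<^sub>R (Hxy (x, y) *v gy),
                         JAy *v dy + \<beta> *\<^sub>R (H *v gy)) | dx dy. (dx, dy) \<in> Df (x, A)}).
            w \<bullet> z)
         \<ge> min (1 / 4) (\<beta>\<^sup>2 / (16 * \<beta>h\<^sup>2)) * (norm w)\<^sup>2"
  proof -
  define H where "H = Hyy (x, y)"
  define Hi where "Hi = matrix_inv H"
  define gy where "gy = snd (Dg (x, y))"
  define A where "A = y - Hi *v gy"
  define d where "d = Hi *v gy"
  define JAx where "JAx = - (Hxy (x, y) ** Hi) + T3xyy (x, y) d ** Hi"
  define JAy where "JAy = T3yyy (x, y) d ** Hi"
  define F where "F = (\<lambda>p. (fst p + JAx *v snd p + \<beta> *\<^sub>R (Hxy (x, y) *v gy),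
                         JAy *v snd p + \<beta> *\<^sub>R (H *v gy)))"
  have Seq: "(let H = Hyy (x, y); Hi = matrix_inv H; gy = snd (Dg (x, y));
                        A = y - Hi *v gy; d = Hi *v gy;
                        JAx = - (Hxy (x, y) ** Hi) + T3xyy (x, y) d ** Hi;
                        JAy = T3yyy (x, y) d ** Hi
                    in {(dx + JAx *v dy + \<beta> *\<^sub>R (Hxy (x, y) *v gy),
                         JAy *v dy + \<beta> *\<^sub>R (H *v gy)) | dx dy. (dx, dy) \<in> Df (x, A)})
            = F ` Df (x, A)"
  proof -
    have e1: "?thesis \<longleftrightarrow> {(dx + JAx *v dy + \<beta> *\<^sub>R (Hxy (x, y) *v gy),
                         JAy *v dy + \<beta> *\<^sub>R (H *v gy)) | dx dy. (dx, dy) \<in> Df (x, A)} = F ` Df (x, A)"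
      unfolding Let_def H_def Hi_def gy_def A_def d_def JAx_def JAy_def by (rule refl)
    show ?thesis unfolding e1
    proof (rule set_eqI, rule iffI)
      fix z assume "z \<in> {(dx + JAx *v dy + \<beta> *\<^sub>R (Hxy (x, y) *v gy),
                         JAy *v dy + \<beta> *\<^sub>R (H *v gy)) | dx dy. (dx, dy) \<in> Df (x, A)}"
      then obtain p q where "z = (p + JAx *v q + \<beta> *\<^sub>R (Hxy (x, y) *v gy),
                         JAy *v q + \<beta> *\<^sub>R (H *v gy))" "(p, q) \<in> Df (x, A)" by blast
      then show "z \<in> F ` Df (x, A)" unfolding F_def by (auto intro!: image_eqI[where x="(p, q)"])
    next
      fix z assume "z \<in> F ` Df (x, A)"
      then obtain p q where "(p, q) \<in> Df (x, A)" "z = F (p, q)" by auto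
      then show "z \<in> {(dx + JAx *v dy + \<beta> *\<^sub>R (Hxy (x, y) *v gy),
                         JAy *v dy + \<beta> *\<^sub>R (H *v gy)) | dx dy. (dx, dy) \<in> Df (x, A)}"
        unfolding F_def by auto
    qed
  qed
  from w_in obtain dx dy where dd: "(dx, dy) \<in> Df (x, A)"
    and w: "w = (dx - (Hxy (x, y) ** Hi) *v dy, \<beta>h *\<^sub>R gy)"
    unfolding Let_def Hi_def H_def gy_def A_def by auto
  have cpt: "compact (Df (x, A))"
    using f_pot unfolding potential_of_def conservative_field_def by blast
  have contF: "continuous_on UNIV F"
    unfolding F_def
    by (auto intro!: continuous_intros bounded_linear.continuous_on[OF matrix_vector_mul_bounded_linear])
  have "compact ((\<lambda>z. w \<bullet> z) ` F ` Df (x, A))"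
    by (intro compact_continuous_image continuous_on_subset[OF contF] cpt continuous_intros) auto
  then have bdd: "bdd_above ((\<lambda>z. w \<bullet> z) ` F ` Df (x, A))"
    by (intro bounded_imp_bdd_above compact_imp_bounded)
  have bpos: "\<beta> > 0"
  proof -
    have "4 * Qg * Mf / \<mu> ^ 3 > 0" using pos by simp
    then show ?thesis using beta by linarith
  qed
  have fin: "finite {8 * Lg\<^sup>2 / \<mu>, 1 / (4 * \<mu>), \<mu> / 4}" by simp
  have mx1: "8 * Lg\<^sup>2 / \<mu> \<le> Max {8 * Lg\<^sup>2 / \<mu>, 1 / (4 * \<mu>), \<mu> / 4}" by (rule Max_ge[OF fin]) simp
  have mx2: "1 / (4 * \<mu>) \<le> Max {8 * Lg\<^sup>2 / \<mu>, 1 / (4 * \<mu>), \<mu> / 4}" by (rule Max_ge[OF fin]) simp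
  have mx3: "\<mu> / 4 \<le> Max {8 * Lg\<^sup>2 / \<mu>, 1 / (4 * \<mu>), \<mu> / 4}" by (rule Max_ge[OF fin]) simp
  have h1: "\<beta>h \<ge> \<beta> * (8 * Lg\<^sup>2 / \<mu>)" using betah mult_left_mono[OF mx1, of \<beta>] bpos by linarith
  have h2: "\<beta>h \<ge> \<beta> * (1 / (4 * \<mu>))" using betah mult_left_mono[OF mx2, of \<beta>] bpos by linarith
  have h3: "\<beta>h \<ge> \<beta> * (\<mu> / 4)" using betah mult_left_mono[OF mx3, of \<beta>] bpos by linarith
  have bhpos: "\<beta>h > 0" using h3 bpos pos by (smt (verit) mult_pos_pos divide_pos_pos)
  have sH: "\<And>v. v \<bullet> (H *v v) \<ge> \<mu> * (norm v)\<^sup>2" using strong H_def by blast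
  have Hinv_bd: "\<And>v. norm (Hi *v v) \<le> norm v / \<mu>"
    using inv_facts(2)[OF pos(2) sH] Hi_def by blast
  define a where "a = dx - (Hxy (x, y) ** Hi) *v dy"
  define u where "u = Hi *v dy"
  define G where "G = norm gy"
  define K where "K = Qg * Mf / \<mu>\<^sup>2"
  have dyb: "norm dy \<le> Mf" using Df_bound dd norm_snd_le[of dy dx] by fastforce
  have ub: "norm u \<le> Mf / \<mu>" unfolding u_def
    using Hinv_bd[of dy] dyb pos(2) by (smt (verit) divide_right_mono)
  have db: "norm d \<le> G / \<mu>" unfolding d_def G_def using Hinv_bd by blast
  have t3bd: "norm (T3xyy (x, y) d *v u) \<le> K * G"
  proof -
    have "norm (T3xyy (x, y) d *v u) \<le> Qg * norm d * norm u"
    proof (rule T3_bound[where M="\<lambda>b'. Hxy (x, b')" and b=y])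
      show "((\<lambda>t. (1 / t) *\<^sub>R (Hxy (x, y + t *\<^sub>R d) - Hxy (x, y))) \<longlongrightarrow> T3xyy (x, y) d) (at 0)"
        using T3xyy_def by blast
      fix z z' :: "real^'p"
      show "onorm (\<lambda>v. (Hxy (x, z) - Hxy (x, z')) *v v) \<le> Qg * dist z z'"
        using Hxy_lip[rule_format, of "(x, z)" "(x, z')"] by (simp add: dist_Pair_Pair)
    qed
    also have "\<dots> \<le> Qg * (G / \<mu>) * (Mf / \<mu>)"
      using pos db ub by (intro mult_mono mult_left_mono) (auto simp: G_def)
    also have "\<dots> = K * G" unfolding K_def by (simp add: power2_eq_square field_simps)
    finally show ?thesis .
  qed
  have t3bd2: "norm (T3yyy (x, y) d *v u) \<le> K * G"
  proof -
    have "norm (T3yyy (x, y) d *v u) \<le> Qg * norm d * norm u"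
    proof (rule T3_bound[where M="\<lambda>b'. Hyy (x, b')" and b=y])
      show "((\<lambda>t. (1 / t) *\<^sub>R (Hyy (x, y + t *\<^sub>R d) - Hyy (x, y))) \<longlongrightarrow> T3yyy (x, y) d) (at 0)"
        using T3yyy_def by blast
      fix z z' :: "real^'p"
      show "onorm (\<lambda>v. (Hyy (x, z) - Hyy (x, z')) *v v) \<le> Qg * dist z z'"
        using Hyy_lip[rule_format, of "(x, z)" "(x, z')"] by (simp add: dist_Pair_Pair)
    qed
    also have "\<dots> \<le> Qg * (G / \<mu>) * (Mf / \<mu>)"
      using pos db ub by (intro mult_mono mult_left_mono) (auto simp: G_def)
    also have "\<dots> = K * G" unfolding K_def by (simp add: power2_eq_square field_simps)
    finally show ?thesis .
  qed
  have hxb: "norm (Hxy (x, y) *v gy) \<le> Lg * G"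
  proof -
    have "norm (Hxy (x, y) *v gy) \<le> Lg * norm gy"
    proof (rule deriv_lip_bound[where f="\<lambda>b'. fst (Dg (x, b'))" and x=y])
      show "((\<lambda>b'. fst (Dg (x, b'))) has_derivative (*v) (Hxy (x, y))) (at y)"
        using Hxy_def by blast
      fix u v :: "real^'p"
      have "norm (fst (Dg (x, u)) - fst (Dg (x, v))) \<le> norm (Dg (x, u) - Dg (x, v))"
        by (metis fst_diff norm_fst_le prod.collapse)
      also have "\<dots> \<le> Lg * dist (x, u) (x, v)" using Dg_lip[rule_format, of "(x, u)" "(x, v)"] by (simp only: dist_norm)
      also have "\<dots> = Lg * norm (u - v)" by (simp add: dist_Pair_Pair dist_norm)
      finally show "norm (fst (Dg (x, u)) - fst (Dg (x, v))) \<le> Lg * norm (u - v)" .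
    qed
    then show ?thesis unfolding G_def .
  qed
  have Fval: "F (dx, dy) = (a + T3xyy (x, y) d *v u + \<beta> *\<^sub>R (Hxy (x, y) *v gy),
                           T3yyy (x, y) d *v u + \<beta> *\<^sub>R (H *v gy))"
  proof -
    have m: "(- M) *v v = - (M *v v)" for M :: "real^'p^'n" and v
      using matrix_vector_mult_diff_rdistrib[of 0 M v] by simp
    show ?thesis unfolding F_def JAx_def JAy_def a_def u_def
      by (simp add: matrix_vector_mult_add_rdistrib matrix_vector_mult_diff_rdistrib m matrix_vector_mul_assoc[symmetric])
  qed
  have ip: "w \<bullet> F (dx, dy) = (norm a)\<^sup>2 + a \<bullet> (T3xyy (x, y) d *v u) + \<beta> * (a \<bullet> (Hxy (x, y) *v gy))
       + \<beta>h * (gy \<bullet> (T3yyy (x, y) d *v u)) + \<beta> * \<beta>h * (gy \<bullet> (H *v gy))"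
    unfolding Fval w a_def[symmetric]
    by (simp add: inner_add_right inner_add_left power2_norm_eq_inner algebra_simps)
  have i1: "a \<bullet> (T3xyy (x, y) d *v u) \<ge> - (norm a * K * G)"
  proof -
    have "\<bar>a \<bullet> (T3xyy (x, y) d *v u)\<bar> \<le> norm a * (K * G)"
      using Cauchy_Schwarz_ineq2 t3bd mult_left_mono norm_ge_zero order_trans by metis
    then show ?thesis by (simp add: algebra_simps)
  qed
  have i2: "\<beta> * (a \<bullet> (Hxy (x, y) *v gy)) \<ge> - (\<beta> * Lg * norm a * G)"
  proof -
    have "\<bar>a \<bullet> (Hxy (x, y) *v gy)\<bar> \<le> norm a * (Lg * G)"
      using Cauchy_Schwarz_ineq2 hxb mult_left_mono norm_ge_zero order_trans by metis
    then have "a \<bullet> (Hxy (x, y) *v gy) \<ge> - (Lg * norm a * G)" by (simp add: algebra_simps)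
    then show ?thesis using bpos by (smt (verit) mult_left_mono mult_minus_right mult.assoc)
  qed
  have i3: "\<beta>h * (gy \<bullet> (T3yyy (x, y) d *v u)) \<ge> - (\<beta>h * K * G\<^sup>2)"
  proof -
    have "\<bar>gy \<bullet> (T3yyy (x, y) d *v u)\<bar> \<le> G * (K * G)"
      unfolding G_def using Cauchy_Schwarz_ineq2 t3bd2[unfolded G_def] mult_left_mono norm_ge_zero order_trans by metis
    then have "gy \<bullet> (T3yyy (x, y) d *v u) \<ge> - (K * G\<^sup>2)" by (simp add: algebra_simps power2_eq_square)
    then show ?thesis using bhpos by (smt (verit) mult_left_mono mult_minus_right mult.assoc)
  qed
  have i4: "\<beta> * \<beta>h * (gy \<bullet> (H *v gy)) \<ge> \<beta> * \<beta>h * \<mu> * G\<^sup>2"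
  proof -
    have "gy \<bullet> (H *v gy) \<ge> \<mu> * G\<^sup>2" using sH G_def by blast
    then show ?thesis using bpos bhpos
      by (metis mult.assoc mult_left_mono less_eq_real_def mult_pos_pos)
  qed
  have P: "w \<bullet> F (dx, dy) \<ge> (norm a)\<^sup>2 - norm a * K * G - \<beta> * Lg * norm a * G - \<beta>h * K * G\<^sup>2 + \<beta> * \<beta>h * \<mu> * G\<^sup>2"
    using ip i1 i2 i3 i4 by linarith
  have Kb: "K \<le> \<beta> * \<mu> / 4"
  proof -
    have "4 * Qg * Mf / \<mu> ^ 3 * (\<mu> / 4) \<le> \<beta> * (\<mu> / 4)" using beta pos by (intro mult_right_mono) auto
    moreover have "4 * Qg * Mf / \<mu> ^ 3 * (\<mu> / 4) = K" unfolding K_def using pos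
      by (simp add: field_simps power2_eq_square power3_eq_cube)
    ultimately have "K \<le> \<beta> * (\<mu> / 4)" by linarith
    then show ?thesis by simp
  qed
  have K0: "K \<ge> 0" unfolding K_def using pos by simp
  have nw: "(norm w)\<^sup>2 = (norm a)\<^sup>2 + \<beta>h\<^sup>2 * G\<^sup>2"
    unfolding w a_def[symmetric] G_def using bhpos by (simp add: norm_Pair power_mult_distrib)
  have main: "min (1 / 4) (\<beta>\<^sup>2 / (16 * \<beta>h\<^sup>2)) * (norm w)\<^sup>2 \<le> w \<bullet> F (dx, dy)"
    unfolding nw
    by (rule alg[OF norm_ge_zero _ bpos bhpos pos(2) _ K0 Kb h1 h2 h3 P]) (use pos G_def in auto)
  show ?thesis unfolding Seq
    by (rule cSUP_upper2[OF bdd _ main]) (use dd in blast)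
qed

end
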